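(* Let $x_1=(a_1,b_1),\dots,x_k=(a_k,b_k)\in\mathbb{F}_2^n\times\mathbb{F}_2^n$ be such that $[x_i,x_j]=1$ for all $i\ne j$. Then for every function $f:\mathbb{F}_2^n\to\mathbb{C}$, $$\sum_{i=1}^k\big|\widehat{\Delta_{a_i}f}(b_i)\big|^2\le\|f\|_2^4.$$
   Context: $[(a,b),(c,d)]=a\cdot d+b\cdot c\in\mathbb{F}_2$ is the standard symplectic form. $\Delta_af(x)=f(x+a)\overline{f(x)}$, $\hat g(b)=\mathbb{E}_{x\in\mathbb{F}_2^n}g(x)(-1)^{b\cdot x}$, $\|f\|_2=(\mathbb{E}_x|f(x)|^2)^{1/2}$. *)

theory Defs
  imports "HOL-Analysis.Analysis"
begin

text \<open>F_2^n is modelled as bool ^ 'n (True = 1), with addition = componentwise xor.\<close>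

definition vadd :: "bool ^ 'n \<Rightarrow> bool ^ 'n \<Rightarrow> bool ^ 'n" where
  "vadd x y = (\<chi> i. x $ i \<noteq> y $ i)"

definition fdot :: "bool ^ 'n \<Rightarrow> bool ^ 'n \<Rightarrow> bool" where
  "fdot a x = odd (card {i. a $ i \<and> x $ i})"

definition symp :: "((bool ^ 'n) \<times> (bool ^ 'n)) \<Rightarrow> ((bool ^ 'n) \<times> (bool ^ 'n)) \<Rightarrow> bool" where
  "symp p q = (fdot (fst p) (snd q) \<noteq> fdot (snd p) (fst q))"

definition sgn2 :: "bool \<Rightarrow> complex" where
  "sgn2 t = (if t then -1 else 1)"

definition Delta :: "bool ^ 'n \<Rightarrow> (bool ^ 'n \<Rightarrow> complex) \<Rightarrow> bool ^ 'n \<Rightarrow> complex" where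
  "Delta a f x = f (vadd x a) * cnj (f x)"

definition fourier :: "(bool ^ 'n \<Rightarrow> complex) \<Rightarrow> bool ^ 'n \<Rightarrow> complex" where
  "fourier g b = (\<Sum>x\<in>UNIV. g x * sgn2 (fdot b x)) / of_nat CARD(bool ^ 'n)"

definition norm2 :: "(bool ^ 'n \<Rightarrow> complex) \<Rightarrow> real" where
  "norm2 f = sqrt ((\<Sum>x\<in>UNIV. (cmod (f x))\<^sup>2) / real CARD(bool ^ 'n))"

end

theory Submission
  imports Defs
begin

lemma vadd_vadd: "vadd (vadd x a) a = x" by (auto simp: vadd_def vec_eq_iff)
lemma vadd_comm: "vadd x a = vadd a x" by (auto simp: vadd_def vec_eq_iff)
lemma vadd_assoc: "vadd (vadd x a) b = vadd x (vadd a b)" by (auto simp: vadd_def vec_eq_iff)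

lemma sum_vadd: "(\<Sum>x\<in>UNIV. h (vadd x a)) = (\<Sum>x\<in>UNIV. h x)"
  by (rule sum.reindex_bij_witness[where i="\<lambda>y. vadd y a" and j="\<lambda>y. vadd y a"]) (auto simp: vadd_vadd)

lemma odd_card_symdiff:
  assumes "finite A" "finite B"
  shows "odd (card ((A - B) \<union> (B - A))) \<longleftrightarrow> (odd (card A) \<noteq> odd (card B))"
proof -
  have d: "(A - B) \<inter> (A \<inter> B) = {}" by blast
  have 1: "card A = card (A - B) + card (A \<inter> B)"
    using card_Un_disjoint[of "A - B" "A \<inter> B", OF _ _ d] assms by (simp add: Un_Diff_Int)
  have 2: "card B = card (B - A) + card (A \<inter> B)"
  proof -
    have d2: "(B - A) \<inter> (A \<inter> B) = {}" by blast
    have u2: "(B - A) \<union> (A \<inter> B) = B" by blast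
    show ?thesis using card_Un_disjoint[of "B - A" "A \<inter> B", OF _ _ d2] assms u2 by simp
  qed
  have 3: "card ((A - B) \<union> (B - A)) = card (A - B) + card (B - A)"
    using assms by (intro card_Un_disjoint) auto
  show ?thesis using 1 2 3 by presburger
qed

lemma fdot_vadd: "fdot b (vadd x a) = (fdot b x \<noteq> fdot b a)"
proof -
  have "{i. b $ i \<and> vadd x a $ i} = ({i. b$i \<and> x$i} - {i. b$i \<and> a$i}) \<union> ({i. b$i \<and> a$i} - {i. b$i \<and> x$i})"
    by (auto simp: vadd_def)
  then show ?thesis unfolding fdot_def by (simp add: odd_card_symdiff)
qed

lemma fdot_comm: "fdot a b = fdot b a"
  by (simp add: fdot_def conj_commute)

lemma sgn2_neq: "sgn2 (p \<noteq> q) = sgn2 p * sgn2 q" by (simp add: sgn2_def)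
lemma sgn2_sq: "sgn2 p * sgn2 p = 1" by (simp add: sgn2_def)
lemma cnj_sgn2: "cnj (sgn2 p) = sgn2 p" by (simp add: sgn2_def)

definition ip :: "(bool^'n \<Rightarrow> complex) \<Rightarrow> (bool^'n \<Rightarrow> complex) \<Rightarrow> complex" where
  "ip g h = (\<Sum>x\<in>UNIV. g x * cnj (h x))"

definition W :: "((bool^'n) \<times> (bool^'n)) \<Rightarrow> (bool^'n \<Rightarrow> complex) \<Rightarrow> bool^'n \<Rightarrow> complex" where
  "W p g x = sgn2 (fdot (snd p) x) * g (vadd x (fst p))"

lemma ip_cnj: "ip h g = cnj (ip g h)"
  by (simp add: ip_def mult.commute)

lemma ip_scale_left: "ip (\<lambda>x. c * u x) h = c * ip u h"
  by (simp add: ip_def sum_distrib_left mult.assoc)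

lemma ip_scale_right: "ip g (\<lambda>x. c * u x) = cnj c * ip g u"
  by (simp add: ip_def sum_distrib_left mult.assoc mult.left_commute)

lemma ip_sum_left: "ip (\<lambda>x. \<Sum>i\<in>I. c i * u i x) h = (\<Sum>i\<in>I. c i * ip (u i) h)"
  by (simp add: ip_def sum_distrib_right sum_distrib_left mult.assoc sum.swap[of _ UNIV I])

lemma ip_sum_right: "ip h (\<lambda>x. \<Sum>i\<in>I. c i * u i x) = (\<Sum>i\<in>I. cnj (c i) * ip h (u i))"
  by (subst ip_cnj, simp add: ip_sum_left ip_cnj[of h])

lemma ip_self: "ip h h = of_real (\<Sum>x\<in>UNIV. (cmod (h x))\<^sup>2)"
  unfolding ip_def of_real_sum by (intro sum.cong refl) (metis complex_norm_square)

lemma ip_expand: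
  "ip (\<lambda>x. g x - of_real c * f x) (\<lambda>x. g x - of_real c * f x)
     = ip g g - of_real c * (ip f g + ip g f) + of_real (c^2) * ip f f"
proof -
  have "(g x - of_real c * f x) * cnj (g x - of_real c * f x)
     = g x * cnj (g x) - of_real c * (f x * cnj (g x) + g x * cnj (f x)) + of_real (c^2) * (f x * cnj (f x))" for x
    by (simp add: algebra_simps power2_eq_square)
  then have "ip (\<lambda>x. g x - of_real c * f x) (\<lambda>x. g x - of_real c * f x)
     = (\<Sum>x\<in>UNIV. g x * cnj (g x) - of_real c * (f x * cnj (g x) + g x * cnj (f x)) + of_real (c^2) * (f x * cnj (f x)))"
    unfolding ip_def by simp
  also have "\<dots> = ip g g - of_real c * (ip f g + ip g f) + of_real (c^2) * ip f f"
    unfolding ip_def sum.distrib sum_subtractf sum_distrib_left[symmetric] by simp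
  finally show ?thesis .
qed

lemma W_adj: "ip (W p g) h = sgn2 (fdot (fst p) (snd p)) * ip g (W p h)"
proof -
  obtain a b where p: "p = (a, b)" by fastforce
  have "ip (W p g) h = (\<Sum>x\<in>UNIV. sgn2 (fdot b x) * g (vadd x a) * cnj (h x))"
    by (simp add: ip_def W_def p)
  also have "\<dots> = (\<Sum>y\<in>UNIV. sgn2 (fdot b (vadd y a)) * g (vadd (vadd y a) a) * cnj (h (vadd y a)))"
    by (rule sum_vadd[symmetric])
  also have "\<dots> = (\<Sum>y\<in>UNIV. sgn2 (fdot a b) * (g y * cnj (sgn2 (fdot b y) * h (vadd y a))))"
  proof (intro sum.cong refl)
    fix y
    show "sgn2 (fdot b (vadd y a)) * g (vadd (vadd y a) a) * cnj (h (vadd y a)) =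
      sgn2 (fdot a b) * (g y * cnj (sgn2 (fdot b y) * h (vadd y a)))"
      by (cases "fdot a b"; cases "fdot b y") (simp_all add: vadd_vadd fdot_vadd sgn2_def fdot_comm[of b a])
  qed
  also have "\<dots> = sgn2 (fdot (fst p) (snd p)) * ip g (W p h)"
    by (simp add: ip_def W_def p sum_distrib_left)
  finally show ?thesis .
qed

lemma W_comm:
  assumes "symp p q"
  shows "W p (W q g) = (\<lambda>x. - W q (W p g) x)"
proof
  fix x
  obtain ap bp where p: "p = (ap, bp)" by fastforce
  obtain aq bq where q: "q = (aq, bq)" by fastforce
  have e: "vadd (vadd x aq) ap = vadd (vadd x ap) aq"
    by (metis vadd_assoc vadd_comm)
  have s: "fdot bq ap \<noteq> fdot bp aq" using assms by (simp add: symp_def p q fdot_comm)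
  show "W p (W q g) x = - W q (W p g) x"
    using s by (simp add: W_def p q fdot_vadd e sgn2_def)
qed

lemma W_sq: "W p (W p g) = (\<lambda>x. sgn2 (fdot (fst p) (snd p)) * g x)"
proof
  fix x
  obtain a b where p: "p = (a, b)" by fastforce
  show "W p (W p g) x = sgn2 (fdot (fst p) (snd p)) * g x"
    by (simp add: W_def p fdot_vadd vadd_vadd sgn2_def fdot_comm[of b a])
qed

lemma W_scale: "W p (\<lambda>x. c * u x) = (\<lambda>x. c * W p u x)"
  by (simp add: W_def fun_eq_iff mult.left_commute)

definition ee :: "((bool^'n) \<times> (bool^'n)) \<Rightarrow> complex" where
  "ee p = (if fdot (fst p) (snd p) then \<i> else 1)"

definition P :: "((bool^'n) \<times> (bool^'n)) \<Rightarrow> (bool^'n \<Rightarrow> complex) \<Rightarrow> bool^'n \<Rightarrow> complex" where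
  "P p g x = ee p * W p g x"

lemma P_adj: "ip (P p g) h = ip g (P p h)"
proof -
  have "ip (P p g) h = ee p * (sgn2 (fdot (fst p) (snd p)) * ip g (W p h))"
    by (simp add: P_def[abs_def] ip_scale_left W_adj)
  also have "\<dots> = ip g (P p h)"
    unfolding P_def[abs_def] ip_scale_right by (simp add: ee_def sgn2_def)
  finally show ?thesis .
qed

lemma P_sq: "P p (P p g) = g"
proof -
  have "P p (P p g) = (\<lambda>x. ee p * (ee p * (sgn2 (fdot (fst p) (snd p)) * g x)))"
    unfolding P_def[abs_def] W_scale by (simp add: W_sq)
  also have "\<dots> = g" by (simp add: ee_def sgn2_def fun_eq_iff)
  finally show ?thesis .
qed

lemma P_anti: assumes "symp p q" shows "P p (P q g) = (\<lambda>x. - P q (P p g) x)"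
proof -
  have "P p (P q g) = (\<lambda>x. ee p * (ee q * W p (W q g) x))"
    unfolding P_def[abs_def] W_scale by simp
  also have "\<dots> = (\<lambda>x. - (ee q * (ee p * W q (W p g) x)))"
    using W_comm[OF assms] by (simp add: fun_eq_iff algebra_simps)
  also have "\<dots> = (\<lambda>x. - P q (P p g) x)"
    unfolding P_def[abs_def] W_scale by simp
  finally show ?thesis .
qed

lemma double_sum_anti:
  fixes u :: "'i \<Rightarrow> 'i \<Rightarrow> complex"
  assumes "finite I" "\<And>i j. i \<in> I \<Longrightarrow> j \<in> I \<Longrightarrow> i \<noteq> j \<Longrightarrow> u i j = - u j i"
  shows "(\<Sum>i\<in>I. \<Sum>j\<in>I. u i j) = (\<Sum>i\<in>I. u i i)"
proof -
  define v where "v i j = (if i = j then 0 else u i j)" for i j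
  have S: "(\<Sum>i\<in>I. \<Sum>j\<in>I. v i j) = (\<Sum>i\<in>I. \<Sum>j\<in>I. v j i)"
    by (rule sum.swap)
  also have "\<dots> = (\<Sum>i\<in>I. \<Sum>j\<in>I. - v i j)"
  proof (intro sum.cong refl)
    fix i j assume "i \<in> I" "j \<in> I"
    then show "v j i = - v i j" using assms(2)[of j i] by (auto simp: v_def)
  qed
  finally have "(\<Sum>i\<in>I. \<Sum>j\<in>I. v i j) = 0"
    by (simp add: sum_negf)
  moreover have "(\<Sum>i\<in>I. \<Sum>j\<in>I. u i j) = (\<Sum>i\<in>I. \<Sum>j\<in>I. v i j) + (\<Sum>i\<in>I. u i i)"
  proof -
    have "(\<Sum>j\<in>I. u i j) = (\<Sum>j\<in>I. v i j) + u i i" if "i \<in> I" for i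
    proof -
      have "(\<Sum>j\<in>I. u i j) = (\<Sum>j\<in>I. v i j + (if i = j then u i i else 0))"
        by (intro sum.cong refl) (auto simp: v_def)
      also have "\<dots> = (\<Sum>j\<in>I. v i j) + u i i"
        using that assms(1) by (simp add: sum.distrib)
      finally show ?thesis .
    qed
    then show ?thesis by (simp add: sum.distrib)
  qed
  ultimately show ?thesis by simp
qed


lemma ip_neg_right: "ip h (\<lambda>x. - u x) = - ip h u"
  by (simp add: ip_def sum_negf)

lemma ip_re_nonneg: "0 \<le> Re (ip h h)"
  by (simp add: ip_self sum_nonneg)

lemma main_ineq:
  fixes y :: "nat \<Rightarrow> ((bool^'n) \<times> (bool^'n))" and f :: "bool^'n \<Rightarrow> complex"
  assumes fin: "finite I" and anti: "\<And>i j. i \<in> I \<Longrightarrow> j \<in> I \<Longrightarrow> i \<noteq> j \<Longrightarrow> symp (y i) (y j)"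
  shows "(\<Sum>i\<in>I. (cmod (ip (W (y i) f) f))\<^sup>2) \<le> (Re (ip f f))\<^sup>2"
proof -
  define t where "t i = Re (ip (P (y i) f) f)" for i
  have real: "ip (P (y i) f) f = of_real (t i)" for i
  proof -
    have "ip (P (y i) f) f = cnj (ip (P (y i) f) f)" by (metis P_adj ip_cnj)
    then show ?thesis unfolding t_def by (auto simp: complex_eq_iff)
  qed
  have absv: "cmod (ip (W (y i) f) f) = \<bar>t i\<bar>" for i
  proof -
    have "ip (P (y i) f) f = ee (y i) * ip (W (y i) f) f" by (simp add: P_def[abs_def] ip_scale_left)
    moreover have "cmod (ee (y i)) = 1" by (simp add: ee_def)
    ultimately have "cmod (ip (W (y i) f) f) = cmod (ip (P (y i) f) f)" by (simp add: norm_mult)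
    then show ?thesis by (simp add: real)
  qed
  define g where "g = (\<lambda>x. \<Sum>i\<in>I. complex_of_real (t i) * P (y i) f x)"
  define T where "T = (\<Sum>i\<in>I. (t i)\<^sup>2)"
  define F where "F = Re (ip f f)"
  have Fe: "ip f f = of_real F" unfolding F_def by (simp add: ip_self)
  have T0: "0 \<le> T" unfolding T_def by (simp add: sum_nonneg)
  have F0: "0 \<le> F" unfolding F_def by (rule ip_re_nonneg)
  have gf: "ip g f = of_real T"
    unfolding g_def ip_sum_left real T_def by (simp add: power2_eq_square)
  have fg: "ip f g = of_real T" by (subst ip_cnj) (simp add: gf)
  define u where "u i j = complex_of_real (t i) * complex_of_real (t j) * ip f (P (y i) (P (y j) f))" for i j
  have gg1: "ip g g = (\<Sum>i\<in>I. \<Sum>j\<in>I. u i j)"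
  proof -
    have "ip g g = (\<Sum>i\<in>I. of_real (t i) * ip (P (y i) f) g)"
      unfolding g_def[of] by (subst ip_sum_left) (simp add: g_def)
    also have "\<dots> = (\<Sum>i\<in>I. \<Sum>j\<in>I. u i j)"
    proof (intro sum.cong refl)
      fix i
      have "ip (P (y i) f) g = (\<Sum>j\<in>I. of_real (t j) * ip (P (y i) f) (P (y j) f))"
        unfolding g_def ip_sum_right by simp
      then show "of_real (t i) * ip (P (y i) f) g = (\<Sum>j\<in>I. u i j)"
        by (simp add: u_def sum_distrib_left P_adj mult.assoc)
    qed
    finally show ?thesis .
  qed
  have "(\<Sum>i\<in>I. \<Sum>j\<in>I. u i j) = (\<Sum>i\<in>I. u i i)"
  proof (rule double_sum_anti[OF fin])
    fix i j assume ij: "i \<in> I" "j \<in> I" "i \<noteq> j"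
    have "P (y i) (P (y j) f) = (\<lambda>x. - P (y j) (P (y i) f) x)"
      using P_anti[OF anti[OF ij]] .
    then show "u i j = - u j i" by (simp add: u_def ip_neg_right)
  qed
  also have "\<dots> = (\<Sum>i\<in>I. of_real ((t i)\<^sup>2 * F))"
    by (intro sum.cong refl) (simp add: u_def P_sq Fe power2_eq_square)
  finally have gg: "ip g g = of_real (T * F)"
    using gg1 by (simp add: T_def sum_distrib_right)
  have key: "0 \<le> T * F - 2 * c * T + c\<^sup>2 * F" for c
  proof -
    have "0 \<le> Re (ip (\<lambda>x. g x - of_real c * f x) (\<lambda>x. g x - of_real c * f x))"
      by (rule ip_re_nonneg)
    also have "\<dots> = T * F - 2 * c * T + c\<^sup>2 * F"
      unfolding ip_expand gg gf fg Fe by simp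
    finally show ?thesis .
  qed
  have TF: "T \<le> F\<^sup>2"
  proof (cases "F = 0")
    case True
    then show ?thesis using key[of 1] T0 by simp
  next
    case False
    then have Fp: "0 < F" using F0 by simp
    have "0 \<le> F * (F\<^sup>2 - T)" using key[of F] by (simp add: algebra_simps power2_eq_square)
    then show ?thesis using Fp by (simp add: zero_le_mult_iff)
  qed
  have "(\<Sum>i\<in>I. (cmod (ip (W (y i) f) f))\<^sup>2) = T"
    unfolding T_def absv by simp
  then show ?thesis using TF by (simp add: F_def)
qed

theorem lemma2p15:
  fixes x :: "nat \<Rightarrow> ((bool ^ 'n) \<times> (bool ^ 'n))"
    and k :: nat
    and f :: "bool ^ 'n \<Rightarrow> complex"
  assumes "\<And>i j. i \<in> {1..k} \<Longrightarrow> j \<in> {1..k} \<Longrightarrow> i \<noteq> j \<Longrightarrow> symp (x i) (x j)"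
  shows "(\<Sum>i=1..k. (cmod (fourier (Delta (fst (x i)) f) (snd (x i))))\<^sup>2) \<le> (norm2 f) ^ 4"
proof -
  define N where "N = real CARD(bool ^ 'n)"
  have Np: "0 < N" unfolding N_def by simp
  have four: "fourier (Delta (fst (x i)) f) (snd (x i)) = ip (W (x i) f) f / of_real N" for i
    unfolding fourier_def Delta_def ip_def W_def N_def by (simp add: mult_ac)
  have lhs: "(\<Sum>i=1..k. (cmod (fourier (Delta (fst (x i)) f) (snd (x i))))\<^sup>2)
      = (\<Sum>i=1..k. (cmod (ip (W (x i) f) f))\<^sup>2) / N\<^sup>2"
    unfolding four using Np by (simp add: norm_divide power_divide sum_divide_distrib)
  have S: "Re (ip f f) = (\<Sum>x\<in>UNIV. (cmod (f x))\<^sup>2)" by (simp add: ip_self)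
  have S0: "0 \<le> (\<Sum>x\<in>UNIV. (cmod (f x))\<^sup>2)" by (simp add: sum_nonneg)
  have rhs: "(norm2 f) ^ 4 = (Re (ip f f))\<^sup>2 / N\<^sup>2"
  proof -
    have "(norm2 f) ^ 4 = ((norm2 f)\<^sup>2)\<^sup>2" by simp
    also have "(norm2 f)\<^sup>2 = (\<Sum>x\<in>UNIV. (cmod (f x))\<^sup>2) / N"
      unfolding norm2_def N_def using S0 by simp
    finally show ?thesis using S by (simp add: power_divide)
  qed
  have "(\<Sum>i=1..k. (cmod (ip (W (x i) f) f))\<^sup>2) \<le> (Re (ip f f))\<^sup>2"
    by (rule main_ineq) (use assms in auto)
  then show ?thesis unfolding lhs rhs using Np by (simp add: divide_right_mono)
qed

end
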